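(* For $\Re(s)\ge0$ and $(u,v)\in\mathbb{D}\times\mathbb{D}$, the function $F=F(s;\cdot,\cdot)$ satisfies the linear partial differential equation $$uP(u)\frac{\partial F}{\partial u}(u,v)+v\left[\rho(1-q)-(s+1+\rho-v)(u-q)\right]\frac{\partial F}{\partial v}(u,v)+\left[u(u-s-1-\rho)+(u-q)(u+v)\right]F(u,v)+L(u,v)=0,$$ where $P(u)=u^2-(s+1+\rho+q)u+sq+\rho+q$ and $$L(u,v)=\frac{v}{1-u}+(u+v)E(q,v)-v(s+1+\rho-v)\frac{\partial E}{\partial v}(q,v).$$
   Context: Queueing model: an $M^{[X]}/M/1$ processor-sharing queue. Batches arrive according to a Poisson process with rate $\rho>0$; each job requires an exponential service with mean $1$; the unit server capacity is shared equally among all jobs present; interarrival times, batch sizes and service requirements are independent. Batch sizes are geometric: $\mathbb{P}(B=b)=(1-q)q^{b-1}$, $b\ge1$, with $q\in(0,1)$, $\rho+q<1$. For $n\ge0,b\ge1$, $\Omega_{n,b}$ is the sojourn time of a tagged batch (from arrival to departure of its last job) given $n$ jobs present at its arrival and batch size $b$; $e^*_{n,b}(s)=\mathbb{E}(e^{-s\Omega_{n,b}})$. $\mathbb{D}$ is the open unit disk. $E(u,v)=E(s;u,v)=\sum_{n\ge0}\sum_{b\ge1}e^*_{n,b}(s)u^nv^b$ on $\mathbb{D}^2$, and $F(u,v)=\frac{E(u,v)-E(q,v)}{u-q}$ for $u\ne q$, $F(q,v)=\frac{\partial E}{\partial u}(q,v)$ (the dependence on $s$ is suppressed). *)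

theory Defs
  imports "HOL-Analysis.Analysis"
begin

text \<open>Embedded jump chain of the M^[X]/M/1-PS queue seen by a tagged batch.
  State (m,k): m = number of non-tagged jobs, k = number of remaining tagged jobs.
  While k \<ge> 1 the total event rate is rho+1 (arrival rate rho, unit service
  capacity shared equally by the m+k jobs), so holding times are iid Exp(rho+1).
  An arrival brings a geometric batch: b+1 jobs with probability (1-q) q^b.
  absorb_prob rho q j m k = probability, starting from (m,k), that the last
  tagged job leaves exactly at the j-th jump.\<close>

fun absorb_prob :: "real \<Rightarrow> real \<Rightarrow> nat \<Rightarrow> nat \<Rightarrow> nat \<Rightarrow> real" where
  "absorb_prob \<rho> q 0 m k = (if k = 0 then 1 else 0)"
| "absorb_prob \<rho> q (Suc j) m k =
     (if k = 0 then 0 else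
        \<rho> / (\<rho> + 1) * (\<Sum>b. (1 - q) * q ^ b * absorb_prob \<rho> q j (m + b + 1) k)
      + 1 / (\<rho> + 1) * (real k / real (m + k)) * absorb_prob \<rho> q j m (k - 1)
      + 1 / (\<rho> + 1) * (real m / real (m + k)) * absorb_prob \<rho> q j (m - 1) k)"

text \<open>Laplace transform of the sojourn time Omega_{n,b}: the sojourn time is the sum of
  J iid Exp(rho+1) holding times, J the absorption step, so
  E exp(-s Omega) = \<Sum>_j P(J=j) ((rho+1)/(rho+1+s))^j.\<close>

definition e_star :: "real \<Rightarrow> real \<Rightarrow> complex \<Rightarrow> nat \<Rightarrow> nat \<Rightarrow> complex" where
  "e_star \<rho> q s n b =
     (\<Sum>j. complex_of_real (absorb_prob \<rho> q j n b) * ((of_real \<rho> + 1) / (of_real \<rho> + 1 + s)) ^ j)"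

definition genE :: "real \<Rightarrow> real \<Rightarrow> complex \<Rightarrow> complex \<Rightarrow> complex \<Rightarrow> complex" where
  "genE \<rho> q s u v = (\<Sum>n. \<Sum>b. e_star \<rho> q s n (Suc b) * u ^ n * v ^ (Suc b))"

definition genF :: "real \<Rightarrow> real \<Rightarrow> complex \<Rightarrow> complex \<Rightarrow> complex \<Rightarrow> complex" where
  "genF \<rho> q s u v =
     (if u = of_real q then deriv (\<lambda>w. genE \<rho> q s w v) (of_real q)
      else (genE \<rho> q s u v - genE \<rho> q s (of_real q) v) / (u - of_real q))"

end

theory Submission
  imports Defs "HOL-Analysis.Analysis"
begin

lemma infsum_eq_suminf':
  fixes f :: "nat \<Rightarrow> 'a::banach"
  assumes "f summable_on UNIV" shows "infsum f UNIV = suminf f"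
  using has_sum_imp_sums[OF has_sum_infsum[OF assms]] by (simp add: sums_iff)

lemma term_le_suminf:
  fixes f :: "nat \<Rightarrow> real"
  shows "summable f \<Longrightarrow> (\<And>n. 0 \<le> f n) \<Longrightarrow> f i \<le> suminf f"
  using sum_le_suminf[of f "{i}"] by auto

lemma suminf_swap_abs:
  fixes c :: "nat \<Rightarrow> nat \<Rightarrow> 'a::banach"
  assumes inner: "\<And>n. summable (\<lambda>b. norm (c n b))"
    and outer: "summable (\<lambda>n. \<Sum>b. norm (c n b))"
  shows "(\<Sum>n. \<Sum>b. c n b) = (\<Sum>b. \<Sum>n. c n b)"
proof -
  have in1: "(\<lambda>b. c n b) summable_on UNIV" for n
    using norm_summable_imp_summable_on[OF inner] .
  have in1n: "(\<lambda>b. norm (c n b)) summable_on UNIV" for n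
    using norm_summable_imp_summable_on[of "\<lambda>b. norm (c n b)"] inner by simp
  have "(\<lambda>x. norm ((\<lambda>(n,b). c n b) x)) summable_on (UNIV \<times> UNIV)"
  proof (rule iffD2[OF Infinite_Sum.abs_summable_on_Sigma_iff], intro conjI ballI)
    show "(\<lambda>y. norm (case (x, y) of (n, b) \<Rightarrow> c n b)) summable_on UNIV" for x
      using in1n by simp
    have eq: "\<And>x. (\<Sum>\<^sub>\<infinity>y. norm (c x y)) = (\<Sum>y. norm (c x y))"
      using infsum_eq_suminf'[OF in1n] by auto
    have sm: "(\<lambda>x. norm (\<Sum>y. norm (c x y))) summable_on UNIV"
      using norm_summable_imp_summable_on[of "\<lambda>x. norm (\<Sum>y. norm (c x y))"] outer
      by (simp add: suminf_nonneg inner)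
    show "(\<lambda>x. norm (\<Sum>\<^sub>\<infinity>y\<in>UNIV. norm (case (x, y) of (n, b) \<Rightarrow> c n b))) summable_on UNIV"
      by (simp add: eq del: real_norm_def) (use sm in simp)
  qed
  then have P: "(\<lambda>(n,b). c n b) summable_on (UNIV \<times> UNIV)"
    by (rule abs_summable_summable)
  have in2: "(\<lambda>n. c n b) summable_on UNIV" for b
  proof -
    have "summable (\<lambda>n. norm (c n b))"
    proof (rule summable_comparison_test'[OF outer])
      fix n show "norm (norm (c n b)) \<le> (\<Sum>b. norm (c n b))"
        using term_le_suminf[OF inner[of n]] by simp
    qed
    then show ?thesis by (rule norm_summable_imp_summable_on)
  qed
  have o1: "(\<lambda>n. infsum (\<lambda>b. c n b) UNIV) summable_on UNIV"
    using summable_on_Sigma_banach[of "\<lambda>n b. c n b" UNIV "\<lambda>_. UNIV"] P by simp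
  have P': "(\<lambda>(b,n). c n b) summable_on (UNIV \<times> UNIV)"
    using P summable_on_swap[of "\<lambda>(n,b). c n b" UNIV UNIV] by simp
  have o2: "(\<lambda>b. infsum (\<lambda>n. c n b) UNIV) summable_on UNIV"
    using summable_on_Sigma_banach[of "\<lambda>b n. c n b" UNIV "\<lambda>_. UNIV"] P' by simp
  have "infsum (\<lambda>n. infsum (\<lambda>b. c n b) UNIV) UNIV = infsum (\<lambda>b. infsum (\<lambda>n. c n b) UNIV) UNIV"
    using infsum_swap_banach[of "\<lambda>n b. c n b" UNIV UNIV] P by simp
  moreover have "infsum (\<lambda>n. infsum (\<lambda>b. c n b) UNIV) UNIV = (\<Sum>n. \<Sum>b. c n b)"
    using infsum_eq_suminf'[OF in1] infsum_eq_suminf'[OF o1] by simp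
  moreover have "infsum (\<lambda>b. infsum (\<lambda>n. c n b) UNIV) UNIV = (\<Sum>b. \<Sum>n. c n b)"
    using infsum_eq_suminf'[OF in2] infsum_eq_suminf'[OF o2] by simp
  ultimately show ?thesis by simp
qed

definition good :: "(nat \<Rightarrow> nat \<Rightarrow> complex) \<Rightarrow> bool" where
  "good c \<longleftrightarrow> (\<forall>r::real. 0 < r \<and> r < 1 \<longrightarrow> (\<exists>M. \<forall>n b. norm (c n b) * r^n * r^b \<le> M))"

definition S :: "(nat \<Rightarrow> nat \<Rightarrow> complex) \<Rightarrow> complex \<Rightarrow> complex \<Rightarrow> complex" where
  "S c u v = (\<Sum>n. \<Sum>b. c n b * u^n * v^b)"

lemma good_r:
  assumes "good c" "0 \<le> a" "a < (1::real)"
  obtains r M where "a < r" "r < 1" "0 \<le> M" "\<And>n b. norm (c n b) * r^n * r^b \<le> M"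
proof -
  define r where "r = (a + 1) / 2"
  have r: "0 < r" "r < 1" "a < r" using assms by (auto simp: r_def)
  then obtain M where M: "\<And>n b. norm (c n b) * r^n * r^b \<le> M"
    using assms(1) unfolding good_def by blast
  have "0 \<le> M" using M[of 0 0] by (metis mult.right_neutral norm_ge_zero order_trans power_0)
  then show ?thesis using that r M by blast
qed

lemma good_dbl:
  assumes "good c" "norm u < 1" "norm v < 1"
  shows "summable (\<lambda>b. norm (c n b * u^n * v^b))"
    and "summable (\<lambda>n. \<Sum>b. norm (c n b * u^n * v^b))"
proof -
  obtain r M where r: "max (norm u) (norm v) < r" "r < 1" "0 \<le> M"
    and M: "\<And>n b. norm (c n b) * r^n * r^b \<le> M"
  proof -
    have m0: "0 \<le> max (norm u) (norm v)" by (simp add: le_max_iff_disj)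
    have m1: "max (norm u) (norm v) < 1" using assms by simp
    show ?thesis using good_r[OF assms(1) m0 m1] that by blast
  qed
  have rpos: "0 < r" using r(1) by (smt (verit) norm_ge_zero)
  define x where "x = norm u / r"
  define y where "y = norm v / r"
  have x: "0 \<le> x" "x < 1" using r rpos by (auto simp: x_def field_simps)
  have y: "0 \<le> y" "y < 1" using r rpos by (auto simp: y_def field_simps)
  have bnd: "norm (c n b * u^n * v^b) \<le> M * x^n * y^b" for n b
  proof -
    have "norm (c n b * u^n * v^b) = (norm (c n b) * r^n * r^b) * x^n * y^b"
      using rpos by (simp add: norm_mult norm_power x_def y_def power_divide)
    also have "\<dots> \<le> M * x^n * y^b"
      using M[of n b] x y by (intro mult_right_mono) auto
    finally show ?thesis .
  qed
  have gy: "summable (\<lambda>b. y^b)" using y by (simp add: summable_geometric)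
  have gx: "summable (\<lambda>n. x^n)" using x by (simp add: summable_geometric)
  have s1: "summable (\<lambda>b. M * x^n * y^b)" for n
    using summable_mult[OF gy, of "M * x^n"] by simp
  show i: "summable (\<lambda>b. norm (c n b * u^n * v^b))" for n
    by (rule summable_comparison_test'[OF s1]) (use bnd in simp)
  have "(\<Sum>b. norm (c n b * u^n * v^b)) \<le> (\<Sum>b. M * x^n * y^b)" for n
    by (rule suminf_le[OF _ i s1]) (rule bnd)
  also have "(\<Sum>b. M * x^n * y^b) = (M / (1 - y)) * x^n" for n
    using suminf_mult[OF gy, of "M * x^n"] y by (simp add: suminf_geometric)
  finally have le: "(\<Sum>b. norm (c n b * u^n * v^b)) \<le> (M / (1 - y)) * x^n" for n .
  show "summable (\<lambda>n. \<Sum>b. norm (c n b * u^n * v^b))"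
  proof (rule summable_comparison_test'[OF summable_mult[OF gx, of "M / (1 - y)"]])
    fix n
    have "0 \<le> (\<Sum>b. norm (c n b * u^n * v^b))" by (simp add: suminf_nonneg i)
    then show "norm (\<Sum>b. norm (c n b * u^n * v^b)) \<le> M / (1 - y) * x^n"
      using le[of n] by simp
  qed
qed

lemma good_S_summ:
  assumes "good c" "norm u < 1" "norm v < 1"
  shows "summable (\<lambda>b. c n b * u^n * v^b)"
    and "summable (\<lambda>n. \<Sum>b. c n b * u^n * v^b)"
proof -
  note d = good_dbl[OF assms]
  show "summable (\<lambda>b. c n b * u^n * v^b)" for n
    by (rule summable_norm_cancel[OF d(1)])
  show "summable (\<lambda>n. \<Sum>b. c n b * u^n * v^b)"
    by (rule summable_comparison_test'[OF d(2)]) (rule summable_norm[OF d(1)])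
qed

lemma good_inner:
  assumes "good c" "norm v < 1"
  shows "summable (\<lambda>b. c n b * v^b)"
proof -
  have "summable (\<lambda>b. c n b * (1/2)^n * v^b)"
    using good_S_summ(1)[OF assms(1) _ assms(2), of "1/2"] by simp
  from summable_mult[OF this, of "2^n"] show ?thesis
    by (simp add: power_divide mult.assoc mult.left_commute[of "2^n"])
qed

lemma S_add:
  assumes "good c" "good d" "norm u < 1" "norm v < 1"
  shows "S (\<lambda>n b. c n b + d n b) u v = S c u v + S d u v"
proof -
  note c = good_S_summ[OF assms(1,3,4)] and d = good_S_summ[OF assms(2,3,4)]
  have "(\<Sum>b. (c n b + d n b) * u^n * v^b) = (\<Sum>b. c n b * u^n * v^b) + (\<Sum>b. d n b * u^n * v^b)" for n
    using suminf_add[OF c(1) d(1)] by (simp add: algebra_simps)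
  then show ?thesis unfolding S_def using suminf_add[OF c(2) d(2)] by simp
qed

lemma S_cmult:
  assumes "good c" "norm u < 1" "norm v < 1"
  shows "S (\<lambda>n b. k * c n b) u v = k * S c u v"
proof -
  note c = good_S_summ[OF assms]
  have "(\<Sum>b. (k * c n b) * u^n * v^b) = k * (\<Sum>b. c n b * u^n * v^b)" for n
    using suminf_mult[OF c(1), of k] by (simp add: algebra_simps)
  then show ?thesis unfolding S_def using suminf_mult[OF c(2), of k] by simp
qed

lemma S_swap:
  assumes "good c" "norm u < 1" "norm v < 1"
  shows "S c u v = S (\<lambda>n b. c b n) v u"
  unfolding S_def
  using suminf_swap_abs[of "\<lambda>n b. c n b * u^n * v^b", OF good_dbl[OF assms]]
  by (simp add: algebra_simps)

lemma good_transpose: "good c \<Longrightarrow> good (\<lambda>n b. c b n)"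
  unfolding good_def by (metis mult.assoc mult.commute)

lemma good_bounded: "(\<And>n b. norm (c n b) \<le> B) \<Longrightarrow> good c"
  unfolding good_def
proof (intro allI impI exI[of _ B])
  fix r :: real and n b assume "\<And>n b. norm (c n b) \<le> B" "0 < r \<and> r < 1"
  then show "norm (c n b) * r^n * r^b \<le> B"
  proof -
    have r1: "r^n * r^b \<le> 1" using \<open>0 < r \<and> r < 1\<close> by (simp add: mult_le_one power_le_one)
    have "norm (c n b) * (r^n * r^b) \<le> norm (c n b)"
      by (rule mult_left_le[OF r1]) simp
    then show ?thesis using \<open>\<And>n b. norm (c n b) \<le> B\<close>[of n b] by (simp add: mult.assoc)
  qed
qed

lemma good_M:
  assumes "good c" "0 < r" "r < 1"
  obtains M where "0 \<le> M" "\<And>n b. norm (c n b) * r^n * r^b \<le> M"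
proof -
  obtain M where M: "\<And>n b. norm (c n b) * r^n * r^b \<le> M"
    using assms unfolding good_def by blast
  have "0 \<le> M" using M[of 0 0] by (metis mult.right_neutral norm_ge_zero order_trans power_0)
  then show ?thesis using that M by blast
qed

lemma good_add: assumes c: "good c" and d: "good d" shows "good (\<lambda>n b. c n b + d n b)"
  unfolding good_def
proof (intro allI impI)
  fix r :: real assume r: "0 < r \<and> r < 1"
  obtain M1 where M1: "\<And>n b. norm (c n b) * r^n * r^b \<le> M1" using good_M[OF c] r by blast
  obtain M2 where M2: "\<And>n b. norm (d n b) * r^n * r^b \<le> M2" using good_M[OF d] r by blast
  show "\<exists>M. \<forall>n b. norm (c n b + d n b) * r^n * r^b \<le> M"
  proof (intro exI allI)
    fix n b
    have "norm (c n b + d n b) * r^n * r^b \<le> (norm (c n b) + norm (d n b)) * r^n * r^b"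
      using r by (intro mult_right_mono norm_triangle_ineq) auto
    also have "\<dots> = norm (c n b) * r^n * r^b + norm (d n b) * r^n * r^b" by (simp add: algebra_simps)
    also have "\<dots> \<le> M1 + M2" using M1[of n b] M2[of n b] by simp
    finally show "norm (c n b + d n b) * r^n * r^b \<le> M1 + M2" .
  qed
qed

lemma good_cmult: assumes c: "good c" shows "good (\<lambda>n b. k * c n b)"
  unfolding good_def
proof (intro allI impI)
  fix r :: real assume r: "0 < r \<and> r < 1"
  obtain M1 where M1: "\<And>n b. norm (c n b) * r^n * r^b \<le> M1" using good_M[OF c] r by blast
  show "\<exists>M. \<forall>n b. norm (k * c n b) * r^n * r^b \<le> M"
  proof (intro exI allI)
    fix n b
    have "norm (k * c n b) * r^n * r^b = norm k * (norm (c n b) * r^n * r^b)"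
      by (simp add: norm_mult algebra_simps)
    also have "\<dots> \<le> norm k * M1" using M1[of n b] by (intro mult_left_mono) auto
    finally show "norm (k * c n b) * r^n * r^b \<le> norm k * M1" .
  qed
qed

lemma good_up_u: assumes c: "good c" shows "good (\<lambda>n b. if n = 0 then 0 else c (n - 1) b)"
  unfolding good_def
proof (intro allI impI)
  fix r :: real assume r: "0 < r \<and> r < 1"
  obtain M1 where M0: "0 \<le> M1" and M1: "\<And>n b. norm (c n b) * r^n * r^b \<le> M1" using good_M[OF c] r by blast
  show "\<exists>M. \<forall>n b. norm (if n = 0 then 0 else c (n - 1) b) * r^n * r^b \<le> M"
  proof (intro exI allI)
    fix n b
    show "norm (if n = 0 then 0 else c (n - 1) b) * r^n * r^b \<le> M1"
    proof (cases n)
      case 0 then show ?thesis using M0 by simp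
    next
      case (Suc m)
      have "norm (c m b) * r^Suc m * r^b = r * (norm (c m b) * r^m * r^b)" by (simp add: algebra_simps)
      also have "\<dots> \<le> 1 * M1" using M1[of m b] r M0
        by (intro mult_mono) (auto intro!: mult_nonneg_nonneg)
      finally show ?thesis using Suc by simp
    qed
  qed
qed

lemma good_down_u: assumes c: "good c" shows "good (\<lambda>n b. c (Suc n) b)"
  unfolding good_def
proof (intro allI impI)
  fix r :: real assume r: "0 < r \<and> r < 1"
  obtain M1 where M0: "0 \<le> M1" and M1: "\<And>n b. norm (c n b) * r^n * r^b \<le> M1" using good_M[OF c] r by blast
  show "\<exists>M. \<forall>n b. norm (c (Suc n) b) * r^n * r^b \<le> M"
  proof (intro exI allI)
    fix n b
    have "norm (c (Suc n) b) * r^n * r^b = (norm (c (Suc n) b) * r^Suc n * r^b) / r"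
      using r by (simp add: field_simps)
    also have "\<dots> \<le> M1 / r" using M1[of "Suc n" b] r by (intro divide_right_mono) auto
    finally show "norm (c (Suc n) b) * r^n * r^b \<le> M1 / r" .
  qed
qed

lemma n_pow_bounded:
  fixes x :: real assumes "0 \<le> x" "x < 1"
  obtains K where "\<And>n. real n * x^n \<le> K"
proof -
  have "(\<lambda>n. of_nat n * x ^ n) \<longlonglongrightarrow> 0" using assms by (intro powser_times_n_limit_0) simp
  then have "Bseq (\<lambda>n. of_nat n * x ^ n)" by (intro convergent_imp_Bseq convergentI)
  from BseqD[OF this] obtain K where K: "\<forall>n. norm (of_nat n * x ^ n :: real) \<le> K" by blast
  have "real n * x^n \<le> K" for n
    using K[rule_format, of n] abs_ge_self[of "real n * x^n"] unfolding real_norm_def by linarith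
  then show ?thesis using that by blast
qed

lemma good_mul_n: assumes c: "good c" shows "good (\<lambda>n b. of_nat n * c n b)"
  unfolding good_def
proof (intro allI impI)
  fix r :: real assume r: "0 < r \<and> r < 1"
  define r1 where "r1 = (1 + r) / 2"
  have r1: "0 < r1" "r1 < 1" "r < r1" using r by (auto simp: r1_def)
  obtain M1 where M0: "0 \<le> M1" and M1: "\<And>n b. norm (c n b) * r1^n * r1^b \<le> M1"
    using good_M[OF c r1(1,2)] by blast
  define x where "x = r / r1"
  have x: "0 \<le> x" "x < 1" using r r1 by (auto simp: x_def field_simps)
  obtain K where K: "\<And>n. real n * x^n \<le> K" using n_pow_bounded[OF x] by blast
  have K0: "0 \<le> K" using K[of 0] by simp
  show "\<exists>M. \<forall>n b. norm (of_nat n * c n b) * r^n * r^b \<le> M"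
  proof (intro exI allI)
    fix n b
    have "norm (of_nat n * c n b) * r^n * r^b = (real n * x^n) * (norm (c n b) * r1^n * r1^b) * x^b"
      using r1 by (simp add: norm_mult x_def power_divide field_simps)
    also have "\<dots> \<le> K * M1 * 1"
      using K[of n] M1[of n b] x M0 K0 r1
      by (intro mult_mono) (auto simp: power_le_one)
    finally show "norm (of_nat n * c n b) * r^n * r^b \<le> K * M1 * 1" .
  qed
qed

definition du :: "(nat \<Rightarrow> nat \<Rightarrow> complex) \<Rightarrow> nat \<Rightarrow> nat \<Rightarrow> complex" where
  "du c = (\<lambda>n b. of_nat (Suc n) * c (Suc n) b)"
definition dv :: "(nat \<Rightarrow> nat \<Rightarrow> complex) \<Rightarrow> nat \<Rightarrow> nat \<Rightarrow> complex" where
  "dv c = (\<lambda>n b. of_nat (Suc b) * c n (Suc b))"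

lemma good_du: assumes "good c" shows "good (du c)"
proof -
  have "good (\<lambda>n b. of_nat n * c n b)" by (rule good_mul_n[OF assms])
  from good_down_u[OF this] show ?thesis unfolding du_def by simp
qed

lemma good_transpose': "good (\<lambda>n b. c b n) \<Longrightarrow> good c"
  using good_transpose[of "\<lambda>n b. c b n"] by simp

lemma good_dv: assumes "good c" shows "good (dv c)"
proof -
  have "good (du (\<lambda>n b. c b n))" by (rule good_du[OF good_transpose[OF assms]])
  then have "good (\<lambda>n b. du (\<lambda>n b. c b n) b n)" by (rule good_transpose)
  moreover have "(\<lambda>n b. du (\<lambda>n b. c b n) b n) = dv c" unfolding du_def dv_def by simp
  ultimately show ?thesis by simp
qed

lemma good_mul_b: assumes "good c" shows "good (\<lambda>n b. of_nat b * c n b)"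
proof -
  have "good (\<lambda>n b. of_nat n * c b n)" by (rule good_mul_n[OF good_transpose[OF assms]])
  from good_transpose[OF this] show ?thesis by simp
qed

lemma good_up_v: assumes "good c" shows "good (\<lambda>n b. if b = 0 then 0 else c n (b - 1))"
proof -
  have "good (\<lambda>n b. if n = 0 then 0 else c b (n - 1))" by (rule good_up_u[OF good_transpose[OF assms]])
  from good_transpose[OF this] show ?thesis by simp
qed

lemma S_shift_u:
  assumes "good c" "norm u < 1" "norm v < 1"
  shows "u * S c u v = S (\<lambda>n b. if n = 0 then 0 else c (n - 1) b) u v"
proof -
  note cs = good_S_summ[OF assms]
  define g where "g n = (\<Sum>b. c n b * u^n * v^b)" for n
  define h where "h n = (\<Sum>b. (if n = 0 then 0 else c (n - 1) b) * u^n * v^b)" for n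
  have h0: "h 0 = 0" by (simp add: h_def)
  have hS: "h (Suc n) = u * g n" for n
    unfolding h_def g_def using suminf_mult[OF cs(1)[of n], of u] by (simp add: algebra_simps)
  have "(\<lambda>n. h (Suc n)) sums (u * S c u v)"
    unfolding hS S_def g_def by (intro sums_mult summable_sums cs(2))
  then have "h sums (u * S c u v)" using sums_Suc_iff[of h] h0 by simp
  then show ?thesis unfolding S_def h_def[symmetric] by (simp add: sums_iff)
qed

lemma S_shift_v:
  assumes "good c" "norm u < 1" "norm v < 1"
  shows "v * S c u v = S (\<lambda>n b. if b = 0 then 0 else c n (b - 1)) u v"
proof -
  have gt: "good (\<lambda>n b. c b n)" using assms(1) by (rule good_transpose)
  have "v * S c u v = v * S (\<lambda>n b. c b n) v u" using S_swap[OF assms] by simp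
  also have "\<dots> = S (\<lambda>n b. if n = 0 then 0 else c b (n - 1)) v u"
    using S_shift_u[OF gt assms(3,2)] by simp
  also have "\<dots> = S (\<lambda>n b. if b = 0 then 0 else c n (b - 1)) u v"
    using S_swap[OF good_up_u[OF gt] assms(3,2)] by simp
  finally show ?thesis .
qed

lemma S_deriv_u:
  assumes "good c" "norm u < 1" "norm v < 1"
  shows "((\<lambda>w. S c w v) has_field_derivative S (du c) u v) (at u)"
proof -
  define A where "A n = (\<Sum>b. c n b * v^b)" for n
  have eqn: "(\<Sum>b. c n b * w^n * v^b) = A n * w^n" for n w
    unfolding A_def using suminf_mult2[OF good_inner[OF assms(1,3)], of n "w^n"]
    by (simp add: algebra_simps)
  have eq: "S c w v = (\<Sum>n. A n * w^n)" for w
    unfolding S_def eqn by simp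
  define K where "K = complex_of_real ((norm u + 1) / 2)"
  have nK: "norm K = (norm u + 1) / 2" unfolding K_def by simp
  have K1: "norm K < 1" "norm u < norm K" using assms nK by auto
  have "summable (\<lambda>n. A n * K^n)"
    using good_S_summ(2)[OF assms(1) K1(1) assms(3)] unfolding eqn .
  from termdiffs_strong[OF this K1(2)]
  have d: "((\<lambda>w. \<Sum>n. A n * w^n) has_field_derivative (\<Sum>n. diffs A n * u^n)) (at u)" .
  have "diffs A n * u^n = (\<Sum>b. du c n b * u^n * v^b)" for n
  proof -
    have "diffs A n * u^n = (of_nat (Suc n) * u^n) * A (Suc n)" by (simp add: diffs_def)
    also have "\<dots> = (\<Sum>b. (of_nat (Suc n) * u^n) * (c (Suc n) b * v^b))"
      unfolding A_def using suminf_mult[OF good_inner[OF assms(1,3)], of "of_nat (Suc n) * u^n"] by simp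
    finally show ?thesis by (simp add: du_def algebra_simps)
  qed
  then have "(\<Sum>n. diffs A n * u^n) = S (du c) u v" unfolding S_def by simp
  with d show ?thesis unfolding eq[abs_def] by simp
qed

lemma S_deriv_v:
  assumes "good c" "norm u < 1" "norm v < 1"
  shows "((\<lambda>w. S c u w) has_field_derivative S (dv c) u v) (at v)"
proof -
  have gt: "good (\<lambda>n b. c b n)" using assms(1) by (rule good_transpose)
  have d: "((\<lambda>w. S (\<lambda>n b. c b n) w u) has_field_derivative S (du (\<lambda>n b. c b n)) v u) (at v)"
    using S_deriv_u[OF gt assms(3,2)] .
  have "S (du (\<lambda>n b. c b n)) v u = S (dv c) u v"
    using S_swap[OF good_du[OF gt] assms(3,2)] unfolding du_def dv_def by simp
  with d have d': "((\<lambda>w. S (\<lambda>n b. c b n) w u) has_field_derivative S (dv c) u v) (at v)" by simp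
  show ?thesis
  proof (rule has_field_derivative_transform_within_open[OF d' _ _])
    show "open (ball 0 1 :: complex set)" by simp
    show "v \<in> ball 0 1" using assms by simp
    fix w :: complex assume "w \<in> ball 0 1"
    then show "S (\<lambda>n b. c b n) w u = S c u w" using S_swap[OF assms(1,2), of w] by simp
  qed
qed

lemma geom_w_sums:
  fixes q :: real assumes "0 \<le> q" "q < 1"
  shows "(\<lambda>b. (1 - q) * q^b) sums 1"
proof -
  have "(\<lambda>b. q^b) sums (1 / (1 - q))" using assms by (intro geometric_sums) simp
  from sums_mult[OF this, of "1 - q"] show ?thesis using assms by simp
qed

lemma wsum_bounds:
  fixes q :: real assumes "0 \<le> q" "q < 1" and g: "\<And>b. 0 \<le> g b \<and> g b \<le> 1"
  shows "summable (\<lambda>b. (1 - q) * q^b * g b)"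
    and "0 \<le> (\<Sum>b. (1 - q) * q^b * g b)" "(\<Sum>b. (1 - q) * q^b * g b) \<le> 1"
proof -
  note G = geom_w_sums[OF assms(1,2)]
  have le: "(1 - q) * q^b * g b \<le> (1 - q) * q^b" for b
    using g[of b] assms by (intro mult_left_le) auto
  have nn: "0 \<le> (1 - q) * q^b * g b" for b using g[of b] assms by simp
  show sm: "summable (\<lambda>b. (1 - q) * q^b * g b)"
    by (rule summable_comparison_test'[OF sums_summable[OF G]]) (use le nn in simp)
  show "0 \<le> (\<Sum>b. (1 - q) * q^b * g b)" using nn sm by (simp add: suminf_nonneg)
  have "(\<Sum>b. (1 - q) * q^b * g b) \<le> (\<Sum>b. (1 - q) * q^b)"
    by (rule suminf_le[OF le sm sums_summable[OF G]])
  then show "(\<Sum>b. (1 - q) * q^b * g b) \<le> 1" using G by (simp add: sums_iff)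
qed

lemma convex3:
  fixes \<rho> X Y Z :: real and m k :: nat
  assumes "\<rho> > 0" "0 < m + k" "0 \<le> X" "X \<le> 1" "0 \<le> Y" "Y \<le> 1" "0 \<le> Z" "Z \<le> 1"
  shows "0 \<le> \<rho> / (\<rho> + 1) * X + 1 / (\<rho> + 1) * (real k / real (m + k)) * Y
              + 1 / (\<rho> + 1) * (real m / real (m + k)) * Z"
    and "\<rho> / (\<rho> + 1) * X + 1 / (\<rho> + 1) * (real k / real (m + k)) * Y
              + 1 / (\<rho> + 1) * (real m / real (m + k)) * Z \<le> 1"
proof -
  define \<beta> where "\<beta> = real k / real (m + k)"
  define \<gamma> where "\<gamma> = real m / real (m + k)"
  have pos: "real (m + k) > 0" using assms(2) by (simp only: of_nat_0_less_iff)
  have "\<beta> + \<gamma> = (real k + real m) / real (m + k)"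
    by (simp add: \<beta>_def \<gamma>_def add_divide_distrib)
  also have "\<dots> = 1" using pos by simp
  finally have bg: "0 \<le> \<beta>" "0 \<le> \<gamma>" "\<beta> + \<gamma> = 1"
    by (auto simp: \<beta>_def \<gamma>_def)
  have eq: "\<rho> / (\<rho> + 1) * X + 1 / (\<rho> + 1) * \<beta> * Y + 1 / (\<rho> + 1) * \<gamma> * Z
      = (\<rho> * X + \<beta> * Y + \<gamma> * Z) / (\<rho> + 1)"
    unfolding add_divide_distrib by simp
  have "\<rho> * X \<le> \<rho>" "\<beta> * Y \<le> \<beta>" "\<gamma> * Z \<le> \<gamma>"
    using assms bg by (auto intro: mult_left_le)
  then have up: "\<rho> * X + \<beta> * Y + \<gamma> * Z \<le> \<rho> + 1" using bg by linarith
  have lo: "0 \<le> \<rho> * X + \<beta> * Y + \<gamma> * Z" using assms bg by simp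
  show "0 \<le> \<rho> / (\<rho> + 1) * X + 1 / (\<rho> + 1) * (real k / real (m + k)) * Y
              + 1 / (\<rho> + 1) * (real m / real (m + k)) * Z"
    using lo assms(1) unfolding \<beta>_def[symmetric] \<gamma>_def[symmetric] eq by simp
  show "\<rho> / (\<rho> + 1) * X + 1 / (\<rho> + 1) * (real k / real (m + k)) * Y
              + 1 / (\<rho> + 1) * (real m / real (m + k)) * Z \<le> 1"
    using up assms(1) unfolding \<beta>_def[symmetric] \<gamma>_def[symmetric] eq by simp
qed

lemma p_bounds:
  assumes "\<rho> > 0" "0 < q" "q < 1"
  shows "0 \<le> absorb_prob \<rho> q j m k \<and> absorb_prob \<rho> q j m k \<le> 1"
proof (induction j arbitrary: m k)
  case 0 then show ?case by simp
next
  case (Suc j)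
  show ?case
  proof (cases "k = 0")
    case True then show ?thesis by simp
  next
    case False
    note W = wsum_bounds[of q "\<lambda>b. absorb_prob \<rho> q j (m + b + 1) k"]
    have W1: "0 \<le> (\<Sum>b. (1 - q) * q ^ b * absorb_prob \<rho> q j (m + b + 1) k)"
      "(\<Sum>b. (1 - q) * q ^ b * absorb_prob \<rho> q j (m + b + 1) k) \<le> 1"
      using W(2,3) Suc.IH assms by auto
    have mk: "0 < m + k" using False by simp
    show ?thesis
      using convex3[OF assms(1) mk W1 Suc.IH[of m "k - 1", THEN conjunct1] Suc.IH[of m "k - 1", THEN conjunct2]
          Suc.IH[of "m - 1" k, THEN conjunct1] Suc.IH[of "m - 1" k, THEN conjunct2]] False
      by (simp del: of_nat_add)
  qed
qed

lemma p_partial: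
  assumes "\<rho> > 0" "0 < q" "q < 1"
  shows "(\<Sum>j<N. absorb_prob \<rho> q j m k) \<le> 1"
proof (induction N arbitrary: m k)
  case 0 show ?case by simp
next
  case (Suc N)
  define T where "T m k = (\<Sum>j<N. absorb_prob \<rho> q j m k)" for m k
  have T01: "0 \<le> T m k \<and> T m k \<le> 1" for m k
    using Suc.IH[of m k] p_bounds[OF assms] unfolding T_def by (auto intro: sum_nonneg)
  show ?case
  proof (cases "k = 0")
    case True
    then show ?thesis by (simp only: sum.lessThan_Suc_shift) simp
  next
    case False
    have sm: "summable (\<lambda>b. (1 - q) * q^b * absorb_prob \<rho> q j (m + b + 1) k)" for j
      using wsum_bounds(1)[of q "\<lambda>b. absorb_prob \<rho> q j (m + b + 1) k"] p_bounds[OF assms] assms by auto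
    have "(\<Sum>j<Suc N. absorb_prob \<rho> q j m k) = (\<Sum>j<N. absorb_prob \<rho> q (Suc j) m k)"
      using False by (simp only: sum.lessThan_Suc_shift) simp
    also have "\<dots> = \<rho> / (\<rho> + 1) * (\<Sum>j<N. \<Sum>b. (1 - q) * q^b * absorb_prob \<rho> q j (m + b + 1) k)
        + 1 / (\<rho> + 1) * (real k / real (m + k)) * T m (k - 1)
        + 1 / (\<rho> + 1) * (real m / real (m + k)) * T (m - 1) k"
      using False by (simp add: T_def sum.distrib sum_distrib_left)
    also have "(\<Sum>j<N. \<Sum>b. (1 - q) * q^b * absorb_prob \<rho> q j (m + b + 1) k)
        = (\<Sum>b. (1 - q) * q^b * T (m + b + 1) k)"
      using suminf_sum[of "{..<N}" "\<lambda>j b. (1 - q) * q^b * absorb_prob \<rho> q j (m + b + 1) k"] sm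
      by (simp add: T_def sum_distrib_left)
    finally have eq: "(\<Sum>j<Suc N. absorb_prob \<rho> q j m k) = \<rho> / (\<rho> + 1) * (\<Sum>b. (1 - q) * q^b * T (m + b + 1) k)
        + 1 / (\<rho> + 1) * (real k / real (m + k)) * T m (k - 1)
        + 1 / (\<rho> + 1) * (real m / real (m + k)) * T (m - 1) k" .
    note W = wsum_bounds[of q "\<lambda>b. T (m + b + 1) k"]
    have W1: "0 \<le> (\<Sum>b. (1 - q) * q^b * T (m + b + 1) k)" "(\<Sum>b. (1 - q) * q^b * T (m + b + 1) k) \<le> 1"
      using W(2,3) T01 assms by auto
    have mk: "0 < m + k" using False by simp
    show ?thesis unfolding eq
      using convex3(2)[OF assms(1) mk W1 T01[of m "k - 1", THEN conjunct1] T01[of m "k - 1", THEN conjunct2]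
          T01[of "m - 1" k, THEN conjunct1] T01[of "m - 1" k, THEN conjunct2]] .
  qed
qed

lemma p_summable:
  assumes "\<rho> > 0" "0 < q" "q < 1"
  shows "summable (\<lambda>j. absorb_prob \<rho> q j m k)" "(\<Sum>j. absorb_prob \<rho> q j m k) \<le> 1"
proof -
  show sm: "summable (\<lambda>j. absorb_prob \<rho> q j m k)"
    by (rule summableI_nonneg_bounded[where x=1]) (use p_bounds[OF assms] p_partial[OF assms] in auto)
  show "(\<Sum>j. absorb_prob \<rho> q j m k) \<le> 1"
    by (rule suminf_le_const[OF sm]) (use p_partial[OF assms] in auto)
qed

definition zz :: "real \<Rightarrow> complex \<Rightarrow> complex" where
  "zz \<rho> s = (of_real \<rho> + 1) / (of_real \<rho> + 1 + s)"

lemma zz_props: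
  assumes "\<rho> > 0" "Re s \<ge> 0"
  shows "norm (zz \<rho> s) \<le> 1" "of_real \<rho> + 1 + s \<noteq> 0" "(of_real \<rho> + 1 + s) * zz \<rho> s = of_real \<rho> + 1"
proof -
  have "Re (of_real \<rho> + 1 + s) \<ge> \<rho> + 1" using assms by simp
  then have n: "norm (of_real \<rho> + 1 + s) \<ge> \<rho> + 1"
    using abs_Re_le_cmod[of "of_real \<rho> + 1 + s"] by linarith
  then show nz: "of_real \<rho> + 1 + s \<noteq> 0" using assms by auto
  have "norm (zz \<rho> s) = (\<rho> + 1) / norm (of_real \<rho> + 1 + s)"
    unfolding zz_def using assms
    by (simp add: norm_divide)
  also have "\<dots> \<le> 1" using n assms by (simp add: divide_le_eq_1)
  finally show "norm (zz \<rho> s) \<le> 1" .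
  show "(of_real \<rho> + 1 + s) * zz \<rho> s = of_real \<rho> + 1" using nz unfolding zz_def by simp
qed

lemma norm_term_le:
  fixes x :: real and z :: complex
  assumes "0 \<le> x" "norm z \<le> 1"
  shows "norm (of_real x * z^j) \<le> x"
proof -
  have "norm (of_real x * z^j) = x * norm z ^ j" using assms by (simp add: norm_mult norm_power)
  also have "\<dots> \<le> x * 1" using assms by (intro mult_left_mono power_le_one) auto
  finally show ?thesis by simp
qed

context
  fixes \<rho> q :: real and s :: complex
  assumes rp: "\<rho> > 0" and q0: "0 < q" and q1: "q < 1" and sp: "Re s \<ge> 0"
begin

lemma e_star_alt: "e_star \<rho> q s n b = (\<Sum>j. of_real (absorb_prob \<rho> q j n b) * zz \<rho> s ^ j)"
  unfolding e_star_def zz_def by simp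

lemma e_terms_summable: "summable (\<lambda>j. norm (of_real (absorb_prob \<rho> q j n b) * zz \<rho> s ^ j))"
  by (rule summable_comparison_test'[OF p_summable(1)[OF rp q0 q1, of n b]])
     (use norm_term_le[OF _ zz_props(1)[OF rp sp]] p_bounds[OF rp q0 q1] in simp)

lemma e_bound: "norm (e_star \<rho> q s n b) \<le> 1"
proof -
  have "norm (e_star \<rho> q s n b) \<le> (\<Sum>j. norm (of_real (absorb_prob \<rho> q j n b) * zz \<rho> s ^ j))"
    unfolding e_star_alt by (rule summable_norm[OF e_terms_summable])
  also have "\<dots> \<le> (\<Sum>j. absorb_prob \<rho> q j n b)"
    by (rule suminf_le[OF _ e_terms_summable p_summable(1)[OF rp q0 q1]])
       (use norm_term_le[OF _ zz_props(1)[OF rp sp]] p_bounds[OF rp q0 q1] in simp)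
  also have "\<dots> \<le> 1" by (rule p_summable(2)[OF rp q0 q1])
  finally show ?thesis .
qed

lemma e_zero: "e_star \<rho> q s n 0 = 1"
proof -
  have "(\<lambda>j. of_real (absorb_prob \<rho> q j n 0) * zz \<rho> s ^ j) = (\<lambda>j. if j = 0 then (\<lambda>_. 1) j else 0)"
    by (rule ext) (case_tac j, auto)
  then show ?thesis unfolding e_star_alt using sums_single[of 0 "\<lambda>_. 1::complex"]
    by (simp add: sums_iff)
qed

lemma of_real_suminf':
  fixes f :: "nat \<Rightarrow> real"
  assumes "summable f" shows "(\<Sum>b. (of_real (f b) :: complex)) = of_real (suminf f)"
proof -
  have "(\<lambda>b. (of_real (f b) :: complex)) sums of_real (suminf f)"
    using sums_of_real_iff[of f "suminf f"] summable_sums[OF assms] by simp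
  then show ?thesis by (simp add: sums_iff)
qed

lemma e_rec:
  assumes k: "k \<noteq> 0"
  shows "(of_real \<rho> + 1 + s) * e_star \<rho> q s m k
    = of_real \<rho> * (\<Sum>b. of_real ((1 - q) * q^b) * e_star \<rho> q s (m + b + 1) k)
      + of_real (real k / real (m + k)) * e_star \<rho> q s m (k - 1)
      + of_real (real m / real (m + k)) * e_star \<rho> q s (m - 1) k"
proof -
  define p where "p = absorb_prob \<rho> q"
  define z where "z = zz \<rho> s"
  define e where "e = e_star \<rho> q s"
  have zle: "norm z \<le> 1" unfolding z_def by (rule zz_props(1)[OF rp sp])
  have pb: "0 \<le> p j a c" "p j a c \<le> 1" for j a c unfolding p_def using p_bounds[OF rp q0 q1] by auto
  have ps: "summable (\<lambda>j. p j a c)" for a c unfolding p_def by (rule p_summable(1)[OF rp q0 q1])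
  have psl: "(\<Sum>j. p j a c) \<le> 1" for a c unfolding p_def by (rule p_summable(2)[OF rp q0 q1])
  have ealt: "e a c = (\<Sum>j. of_real (p j a c) * z^j)" for a c
    unfolding e_def p_def z_def by (rule e_star_alt)
  have tsum: "summable (\<lambda>j. of_real (p j a c) * z^j)" for a c
    unfolding p_def z_def by (rule summable_norm_cancel[OF e_terms_summable])
  define t where "t j = of_real (p j m k) * z^j" for j
  have t0: "t 0 = 0" using k by (simp add: t_def p_def)
  have e1: "e m k = (\<Sum>j. t (Suc j))"
    using suminf_split_head[OF tsum[of m k]] t0 unfolding ealt t_def[symmetric] by simp
  define X where "X j = (\<Sum>b. (1 - q) * q^b * p j (m + b + 1) k)" for j
  have Xw: "0 \<le> X j" "summable (\<lambda>b. (1 - q) * q^b * p j (m + b + 1) k)" for j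
    using wsum_bounds[of q "\<lambda>b. p j (m + b + 1) k"] pb q0 q1 unfolding X_def by auto
  define \<alpha> where "\<alpha> = \<rho> / (\<rho> + 1)"
  define \<beta> where "\<beta> = 1 / (\<rho> + 1) * (real k / real (m + k))"
  define \<gamma> where "\<gamma> = 1 / (\<rho> + 1) * (real m / real (m + k))"
  have pS: "p (Suc j) m k = \<alpha> * X j + \<beta> * p j m (k - 1) + \<gamma> * p j (m - 1) k" for j
    unfolding p_def X_def \<alpha>_def \<beta>_def \<gamma>_def by (simp only: absorb_prob.simps(2) if_not_P[OF k])
  have bg0: "0 \<le> \<beta>" "0 \<le> \<gamma>" "0 < \<alpha>" using rp by (auto simp: \<alpha>_def \<beta>_def \<gamma>_def)
  have Xle: "X j \<le> (1 / \<alpha>) * p (Suc j) m k" for j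
  proof -
    have "\<alpha> * X j \<le> p (Suc j) m k" using pS[of j] bg0 pb[of j m "k - 1"] pb[of j "m - 1" k] by simp
    then show ?thesis using bg0 by (simp add: field_simps)
  qed
  define A where "A j = of_real (X j) * z^j" for j
  define B where "B j = of_real (p j m (k - 1)) * z^j" for j
  define C where "C j = of_real (p j (m - 1) k) * z^j" for j
  have sA: "summable A"
  proof (rule summable_norm_cancel, rule summable_comparison_test')
    show "summable (\<lambda>j. (1 / \<alpha>) * p (Suc j) m k)"
      by (intro summable_mult) (rule summable_Suc_iff[of "\<lambda>j. p j m k", THEN iffD2, OF ps])
    fix j
    have "norm (A j) \<le> X j" unfolding A_def by (rule norm_term_le[OF Xw(1) zle])
    then show "norm (norm (A j)) \<le> 1 / \<alpha> * p (Suc j) m k"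
      using Xle[of j] by simp
  qed
  have sB: "summable B" unfolding B_def by (rule tsum)
  have sC: "summable C" unfolding C_def by (rule tsum)
  have tS: "t (Suc j) = z * (of_real \<alpha> * A j + of_real \<beta> * B j + of_real \<gamma> * C j)" for j
    unfolding t_def pS A_def B_def C_def by (simp add: algebra_simps)
  have "(\<Sum>j. t (Suc j)) = z * (of_real \<alpha> * suminf A + of_real \<beta> * suminf B + of_real \<gamma> * suminf C)"
  proof -
    have s1: "summable (\<lambda>j. of_real \<alpha> * A j + of_real \<beta> * B j)"
      by (intro summable_add summable_mult sA sB)
    have s2: "summable (\<lambda>j. of_real \<gamma> * C j)" by (intro summable_mult sC)
    have "(\<Sum>j. t (Suc j)) = z * (\<Sum>j. of_real \<alpha> * A j + of_real \<beta> * B j + of_real \<gamma> * C j)"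
      unfolding tS by (rule suminf_mult[OF summable_add[OF s1 s2]])
    also have "(\<Sum>j. of_real \<alpha> * A j + of_real \<beta> * B j + of_real \<gamma> * C j)
        = of_real \<alpha> * suminf A + of_real \<beta> * suminf B + of_real \<gamma> * suminf C"
      using suminf_add[OF s1 s2] suminf_add[OF summable_mult[OF sA] summable_mult[OF sB]]
        suminf_mult[OF sA] suminf_mult[OF sB] suminf_mult[OF sC] by simp
    finally show ?thesis .
  qed
  moreover have "suminf B = e m (k - 1)" unfolding B_def ealt ..
  moreover have "suminf C = e (m - 1) k" unfolding C_def ealt ..
  moreover have "suminf A = (\<Sum>b. of_real ((1 - q) * q^b) * e (m + b + 1) k)"
  proof -
    define c where "c b j = of_real ((1 - q) * q^b * p j (m + b + 1) k) * z^j" for b j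
    have aw: "0 \<le> (1 - q) * q^b" for b using q0 q1 by simp
    have cn: "norm (c b j) \<le> (1 - q) * q^b * p j (m + b + 1) k" for b j
      unfolding c_def by (rule norm_term_le[OF _ zle]) (use aw pb in simp)
    have i1: "summable (\<lambda>j. norm (c b j))" for b
      by (rule summable_comparison_test'[OF summable_mult[OF ps[of "m + b + 1" k], of "(1 - q) * q^b"]])
         (use cn in \<open>simp add: mult.assoc\<close>)
    have o1: "summable (\<lambda>b. \<Sum>j. norm (c b j))"
    proof (rule summable_comparison_test'[OF sums_summable[OF geom_w_sums]])
      show "0 \<le> q" "q < 1" using q0 q1 by auto
      fix b
      have "(\<Sum>j. norm (c b j)) \<le> (\<Sum>j. (1 - q) * q^b * p j (m + b + 1) k)"
        by (rule suminf_le[OF cn i1 summable_mult[OF ps]])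
      also have "\<dots> = (1 - q) * q^b * (\<Sum>j. p j (m + b + 1) k)" by (rule suminf_mult[OF ps])
      also have "\<dots> \<le> (1 - q) * q^b * 1" by (rule mult_left_mono[OF psl aw])
      finally show "norm (\<Sum>j. norm (c b j)) \<le> (1 - q) * q^b"
        by (simp add: suminf_nonneg i1)
    qed
    have sw: "(\<Sum>b. \<Sum>j. c b j) = (\<Sum>j. \<Sum>b. c b j)" by (rule suminf_swap_abs[OF i1 o1])
    have "(\<Sum>j. c b j) = of_real ((1 - q) * q^b) * e (m + b + 1) k" for b
    proof -
      have "(\<Sum>j. c b j) = (\<Sum>j. of_real ((1 - q) * q^b) * (of_real (p j (m + b + 1) k) * z^j))"
        unfolding c_def by (simp add: mult.assoc)
      also have "\<dots> = of_real ((1 - q) * q^b) * e (m + b + 1) k"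
        unfolding ealt by (rule suminf_mult[OF tsum])
      finally show ?thesis .
    qed
    moreover have "(\<Sum>b. c b j) = A j" for j
    proof -
      have "(\<Sum>b. c b j) = (\<Sum>b. of_real ((1 - q) * q^b * p j (m + b + 1) k)) * z^j"
        unfolding c_def by (rule suminf_mult2[symmetric]) (rule summable_of_real[OF Xw(2)])
      also have "\<dots> = A j" unfolding A_def X_def of_real_suminf'[OF Xw(2)] ..
      finally show ?thesis .
    qed
    ultimately show ?thesis using sw by simp
  qed
  ultimately have e2: "e m k = z * (of_real \<alpha> * (\<Sum>b. of_real ((1 - q) * q^b) * e (m + b + 1) k)
      + of_real \<beta> * e m (k - 1) + of_real \<gamma> * e (m - 1) k)" using e1 by simp
  have zm: "(of_real \<rho> + 1 + s) * z = of_real (\<rho> + 1)" unfolding z_def using zz_props(3)[OF rp sp] by simp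
  have "(of_real \<rho> + 1 + s) * e m k = of_real (\<rho> + 1) * (of_real \<alpha> * (\<Sum>b. of_real ((1 - q) * q^b) * e (m + b + 1) k)
      + of_real \<beta> * e m (k - 1) + of_real \<gamma> * e (m - 1) k)"
    unfolding e2 mult.assoc[symmetric] zm ..
  also have "\<dots> = of_real ((\<rho> + 1) * \<alpha>) * (\<Sum>b. of_real ((1 - q) * q^b) * e (m + b + 1) k)
      + of_real ((\<rho> + 1) * \<beta>) * e m (k - 1) + of_real ((\<rho> + 1) * \<gamma>) * e (m - 1) k"
    by (simp only: of_real_mult distrib_left mult.assoc)
  finally have fin: "(of_real \<rho> + 1 + s) * e m k = of_real ((\<rho> + 1) * \<alpha>) * (\<Sum>b. of_real ((1 - q) * q^b) * e (m + b + 1) k)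
      + of_real ((\<rho> + 1) * \<beta>) * e m (k - 1) + of_real ((\<rho> + 1) * \<gamma>) * e (m - 1) k" .
  have h: "(\<rho> + 1) * \<alpha> = \<rho>" "(\<rho> + 1) * \<beta> = real k / real (m + k)" "(\<rho> + 1) * \<gamma> = real m / real (m + k)"
    using rp by (auto simp: \<alpha>_def \<beta>_def \<gamma>_def)
  show ?thesis using fin unfolding e_def h .
qed

end

lemma S_diff:
  assumes "good c" "good d" "norm u < 1" "norm v < 1"
  shows "S (\<lambda>n b. c n b - d n b) u v = S c u v - S d u v"
proof -
  note c = good_S_summ[OF assms(1,3,4)] and d = good_S_summ[OF assms(2,3,4)]
  have "(\<Sum>b. (c n b - d n b) * u^n * v^b) = (\<Sum>b. c n b * u^n * v^b) - (\<Sum>b. d n b * u^n * v^b)" for n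
    using suminf_diff[OF c(1) d(1)] by (simp add: algebra_simps)
  then show ?thesis unfolding S_def using suminf_diff[OF c(2) d(2)] by simp
qed

lemma S_mul_n:
  assumes "good c" "norm u < 1" "norm v < 1"
  shows "u * S (du c) u v = S (\<lambda>n b. of_nat n * c n b) u v"
proof -
  have "u * S (du c) u v = S (\<lambda>n b. if n = 0 then 0 else du c (n - 1) b) u v"
    by (rule S_shift_u[OF good_du[OF assms(1)] assms(2,3)])
  also have "(\<lambda>n b. if n = 0 then 0 else du c (n - 1) b) = (\<lambda>n b. of_nat n * c n b)"
    by (intro ext) (simp add: du_def split: nat.split)
  finally show ?thesis .
qed

lemma S_mul_b:
  assumes "good c" "norm u < 1" "norm v < 1"
  shows "v * S (dv c) u v = S (\<lambda>n b. of_nat b * c n b) u v"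
proof -
  have "v * S (dv c) u v = S (\<lambda>n b. if b = 0 then 0 else dv c n (b - 1)) u v"
    by (rule S_shift_v[OF good_dv[OF assms(1)] assms(2,3)])
  also have "(\<lambda>n b. if b = 0 then 0 else dv c n (b - 1)) = (\<lambda>n b. of_nat b * c n b)"
    by (intro ext) (simp add: dv_def split: nat.split)
  finally show ?thesis .
qed

lemma S_ind:
  assumes "norm u < 1"
  shows "S (\<lambda>n b. if b = 1 then 1 else 0) u v = v / (1 - u)"
proof -
  have i: "(\<Sum>b. (if b = 1 then 1 else 0) * u^n * v^b) = u^n * v" for n
  proof -
    have "(\<lambda>b. (if b = 1 then 1 else 0) * u^n * v^b) = (\<lambda>b. if b = 1 then (\<lambda>b. u^n * v^b) b else 0)"
      by auto
    then show ?thesis using sums_single[of 1 "\<lambda>b. u^n * v^b"] by (simp add: sums_iff)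
  qed
  have "(\<Sum>n. u^n * v) = (\<Sum>n. u^n) * v" by (rule suminf_mult2[symmetric]) (use assms in simp)
  then show ?thesis unfolding S_def i using assms by (simp add: suminf_geometric)
qed

lemma good_ind: "good (\<lambda>n b. if b = 1 then 1 else 0)"
  by (rule good_bounded[of _ 1]) simp

definition ep :: "real \<Rightarrow> real \<Rightarrow> complex \<Rightarrow> nat \<Rightarrow> nat \<Rightarrow> complex" where
  "ep \<rho> q s n b = (if b = 0 then 0 else e_star \<rho> q s n b)"

definition fc :: "real \<Rightarrow> real \<Rightarrow> complex \<Rightarrow> nat \<Rightarrow> nat \<Rightarrow> complex" where
  "fc \<rho> q s n b = (\<Sum>c. (of_real q)^c * ep \<rho> q s (n + c + 1) b)"

context
  fixes \<rho> q :: real and s :: complex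
  assumes rp: "\<rho> > 0" and q0: "0 < q" and q1: "q < 1" and sp: "Re s \<ge> 0"
begin

lemma ep_bound: "norm (ep \<rho> q s n b) \<le> 1"
  unfolding ep_def using e_bound[OF rp q0 q1 sp] by simp

lemma good_ep: "good (ep \<rho> q s)"
  by (rule good_bounded[of _ 1]) (rule ep_bound)

lemma fc_terms: "summable (\<lambda>c. norm ((of_real q)^c * ep \<rho> q s m b))"
  and fc_terms_le: "norm ((of_real q :: complex)^c * ep \<rho> q s m b) \<le> q^c"
proof -
  show le: "norm ((of_real q :: complex)^c * ep \<rho> q s m b) \<le> q^c" for c m b
  proof -
    have "norm ((of_real q :: complex)^c * ep \<rho> q s m b) = q^c * norm (ep \<rho> q s m b)"
      using q0 by (simp add: norm_mult norm_power)
    also have "\<dots> \<le> q^c * 1" using q0 ep_bound by (intro mult_left_mono) auto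
    finally show ?thesis by simp
  qed
  show "summable (\<lambda>c. norm ((of_real q)^c * ep \<rho> q s m b))"
    by (rule summable_comparison_test'[OF summable_geometric[of q]]) (use q0 q1 le in auto)
qed

lemma fc_summable: "summable (\<lambda>c. (of_real q)^c * ep \<rho> q s (n + c + 1) b)"
proof (rule summable_comparison_test'[OF summable_geometric[of q]])
  show "norm q < 1" using q0 q1 by simp
  fix c show "norm ((of_real q)^c * ep \<rho> q s (n + c + 1) b) \<le> q^c" by (rule fc_terms_le)
qed

lemma fc_bound: "norm (fc \<rho> q s n b) \<le> 1 / (1 - q)"
proof -
  have gq: "summable (\<lambda>c. q^c)" using q0 q1 by (simp add: summable_geometric)
  have sn: "summable (\<lambda>c. norm ((of_real q)^c * ep \<rho> q s (n + c + 1) b))"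
    by (rule summable_comparison_test'[OF gq]) (simp add: fc_terms_le)
  have "norm (fc \<rho> q s n b) \<le> (\<Sum>c. norm ((of_real q)^c * ep \<rho> q s (n + c + 1) b))"
    unfolding fc_def by (rule summable_norm[OF sn])
  also have "\<dots> \<le> (\<Sum>c. q^c)"
    by (rule suminf_le[OF _ sn gq]) (rule fc_terms_le)
  also have "\<dots> = 1 / (1 - q)" using q0 q1 by (simp add: suminf_geometric)
  finally show ?thesis .
qed

lemma good_fc: "good (fc \<rho> q s)"
  by (rule good_bounded[of _ "1 / (1 - q)"]) (rule fc_bound)

end

context
  fixes \<rho> q :: real and s :: complex
  assumes rp: "\<rho> > 0" and q0: "0 < q" and q1: "q < 1" and sp: "Re s \<ge> 0"
begin

lemma genE_S:
  assumes "norm x < 1" "norm y < 1"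
  shows "genE \<rho> q s x y = S (ep \<rho> q s) x y"
proof -
  have "(\<Sum>b. e_star \<rho> q s n (Suc b) * x^n * y^(Suc b)) = (\<Sum>b. ep \<rho> q s n b * x^n * y^b)" for n
  proof -
    have sm: "summable (\<lambda>b. ep \<rho> q s n b * x^n * y^b)"
      by (rule good_S_summ(1)[OF good_ep[OF rp q0 q1 sp] assms])
    show ?thesis using suminf_split_head[OF sm] by (simp add: ep_def)
  qed
  then show ?thesis unfolding genE_def S_def by simp
qed

definition gq :: "nat \<Rightarrow> complex" where
  "gq b = ep \<rho> q s 0 b + of_real q * fc \<rho> q s 0 b"

lemma good_gq_ind: "good (\<lambda>n b. if n = 0 then gq b else 0)"
proof (rule good_bounded[of _ "1 + q * (1 / (1 - q))"])
  fix n b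
  have "norm (gq b) \<le> norm (ep \<rho> q s 0 b) + norm (of_real q * fc \<rho> q s 0 b)"
    unfolding gq_def by (rule norm_triangle_ineq)
  also have "\<dots> \<le> 1 + q * (1 / (1 - q))"
  proof (rule add_mono)
    show "norm (ep \<rho> q s 0 b) \<le> 1" by (rule ep_bound[OF rp q0 q1 sp])
    have "norm (of_real q * fc \<rho> q s 0 b) = q * norm (fc \<rho> q s 0 b)" using q0 by (simp add: norm_mult)
    also have "\<dots> \<le> q * (1 / (1 - q))" by (rule mult_left_mono[OF fc_bound[OF rp q0 q1 sp]]) (use q0 in simp)
    finally show "norm (of_real q * fc \<rho> q s 0 b) \<le> q * (1 / (1 - q))" .
  qed
  finally show "norm (if n = 0 then gq b else 0) \<le> 1 + q * (1 / (1 - q))"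
    using q0 q1 by auto
qed

lemma fc_step: "fc \<rho> q s m b - of_real q * fc \<rho> q s (Suc m) b = ep \<rho> q s (Suc m) b"
proof -
  define h where "h c = (of_real q)^c * ep \<rho> q s (m + c + 1) b" for c
  have sm: "summable h" unfolding h_def by (rule fc_summable[OF rp q0 q1 sp])
  have sm2: "summable (\<lambda>c. (of_real q)^c * ep \<rho> q s (Suc m + c + 1) b)" by (rule fc_summable[OF rp q0 q1 sp])
  have "(\<Sum>c. h (Suc c)) = of_real q * fc \<rho> q s (Suc m) b"
    unfolding h_def fc_def using suminf_mult[OF sm2, of "of_real q"]
    by (simp add: mult.assoc)
  then show ?thesis using suminf_split_head[OF sm] unfolding h_def fc_def by simp
qed

lemma gq_eq: "(\<Sum>n. (of_real q)^n * ep \<rho> q s n b) = gq b"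
proof -
  define h where "h n = (of_real q)^n * ep \<rho> q s n b" for n
  have sm: "summable h"
    unfolding h_def
    by (rule summable_comparison_test'[OF summable_geometric[of q]]) (use q0 q1 fc_terms_le[OF rp q0 q1 sp] in auto)
  have sm2: "summable (\<lambda>c. (of_real q)^c * ep \<rho> q s (0 + c + 1) b)" by (rule fc_summable[OF rp q0 q1 sp])
  have "(\<Sum>n. h (Suc n)) = of_real q * fc \<rho> q s 0 b"
    unfolding h_def fc_def using suminf_mult[OF sm2, of "of_real q"] by (simp add: mult.assoc)
  then show ?thesis using suminf_split_head[OF sm] unfolding h_def gq_def by simp
qed

lemma F4:
  assumes x: "norm x < 1" and y: "norm y < 1"
  shows "(x - of_real q) * S (fc \<rho> q s) x y = S (ep \<rho> q s) x y - S (ep \<rho> q s) (of_real q) y"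
proof -
  note gf = good_fc[OF rp q0 q1 sp] and ge = good_ep[OF rp q0 q1 sp]
  have Q: "norm (of_real q :: complex) < 1" using q0 q1 by simp
  have "(x - of_real q) * S (fc \<rho> q s) x y = x * S (fc \<rho> q s) x y - of_real q * S (fc \<rho> q s) x y"
    by (simp add: algebra_simps)
  also have "\<dots> = S (\<lambda>n b. if n = 0 then 0 else fc \<rho> q s (n - 1) b) x y - S (\<lambda>n b. of_real q * fc \<rho> q s n b) x y"
    using S_shift_u[OF gf x y] S_cmult[OF gf x y, of "of_real q"] by simp
  also have "\<dots> = S (\<lambda>n b. (if n = 0 then 0 else fc \<rho> q s (n - 1) b) - of_real q * fc \<rho> q s n b) x y"
    by (rule S_diff[OF good_up_u[OF gf] good_cmult[OF gf] x y, symmetric])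
  also have "(\<lambda>n b. (if n = 0 then 0 else fc \<rho> q s (n - 1) b) - of_real q * fc \<rho> q s n b)
      = (\<lambda>n b. ep \<rho> q s n b - (if n = 0 then gq b else 0))"
  proof (intro ext)
    fix n b show "(if n = 0 then 0 else fc \<rho> q s (n - 1) b) - of_real q * fc \<rho> q s n b
        = ep \<rho> q s n b - (if n = 0 then gq b else 0)"
      using fc_step[of "n - 1" b] by (cases n) (auto simp: gq_def)
  qed
  also have "S (\<lambda>n b. ep \<rho> q s n b - (if n = 0 then gq b else 0)) x y
      = S (ep \<rho> q s) x y - S (\<lambda>n b. if n = 0 then gq b else 0) x y"
    by (rule S_diff[OF ge good_gq_ind x y])
  also have "S (\<lambda>n b. if n = 0 then gq b else 0) x y = (\<Sum>b. gq b * y^b)"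
  proof -
    have "(\<Sum>b. (if n = 0 then gq b else 0) * x^n * y^b) = (if n = 0 then (\<lambda>_. \<Sum>b. gq b * y^b) n else 0)" for n
      by simp
    then show ?thesis unfolding S_def using sums_single[of 0 "\<lambda>_. \<Sum>b. gq b * y^b"]
      by (simp add: sums_iff)
  qed
  also have "(\<Sum>b. gq b * y^b) = S (ep \<rho> q s) (of_real q) y"
  proof -
    have "S (ep \<rho> q s) (of_real q) y = S (\<lambda>n b. ep \<rho> q s b n) y (of_real q)"
      by (rule S_swap[OF ge Q y])
    also have "\<dots> = (\<Sum>n. gq n * y^n)"
    proof -
      have "(\<Sum>b. ep \<rho> q s b n * y^n * (of_real q)^b) = gq n * y^n" for n
      proof -
        have sm: "summable (\<lambda>b. (of_real q)^b * ep \<rho> q s b n)"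
          by (rule summable_comparison_test'[OF summable_geometric[of q]]) (use q0 q1 fc_terms_le[OF rp q0 q1 sp] in auto)
        have "(\<Sum>b. ep \<rho> q s b n * y^n * (of_real q)^b) = (\<Sum>b. (of_real q)^b * ep \<rho> q s b n) * y^n"
          using suminf_mult2[OF sm, of "y^n"] by (simp add: algebra_simps)
        then show ?thesis using gq_eq by simp
      qed
      then show ?thesis unfolding S_def by simp
    qed
    finally show ?thesis by simp
  qed
  finally show ?thesis .
qed

end

context
  fixes \<rho> q :: real and s :: complex
  assumes rp: "\<rho> > 0" and q0: "0 < q" and q1: "q < 1" and sp: "Re s \<ge> 0"
begin

lemma Qn: "norm (of_real q :: complex) < 1" using q0 q1 by simp

lemma genE_expand:
  assumes "norm w < 1" "norm y < 1"
  shows "genE \<rho> q s w y = S (ep \<rho> q s) (of_real q) y + (w - of_real q) * S (fc \<rho> q s) w y"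
  using F4[OF rp q0 q1 sp assms] genE_S[OF rp q0 q1 sp assms] by simp

lemma S_expand:
  assumes "norm w < 1" "norm y < 1"
  shows "S (ep \<rho> q s) w y = S (ep \<rho> q s) (of_real q) y + (w - of_real q) * S (fc \<rho> q s) w y"
  using F4[OF rp q0 q1 sp assms] by simp

lemma deriv_expand_u:
  assumes "norm u < 1" "norm y < 1"
  shows "((\<lambda>w. S (ep \<rho> q s) (of_real q) y + (w - of_real q) * S (fc \<rho> q s) w y) has_field_derivative
          S (fc \<rho> q s) u y + (u - of_real q) * S (du (fc \<rho> q s)) u y) (at u)"
proof -
  have d1: "((\<lambda>w. w - of_real q) has_field_derivative 1) (at u)"
    by (auto intro!: derivative_eq_intros)
  note d2 = S_deriv_u[OF good_fc[OF rp q0 q1 sp] assms]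
  from DERIV_add[OF DERIV_const DERIV_mult[OF d1 d2]] show ?thesis
    by (simp add: algebra_simps)
qed

lemma genF_S:
  assumes x: "norm x < 1" and y: "norm y < 1"
  shows "genF \<rho> q s x y = S (fc \<rho> q s) x y"
proof (cases "x = of_real q")
  case False
  then have "x - of_real q \<noteq> 0" by simp
  then show ?thesis
    unfolding genF_def using False F4[OF rp q0 q1 sp x y] genE_S[OF rp q0 q1 sp x y] genE_S[OF rp q0 q1 sp Qn y]
    by (simp add: field_simps)
next
  case True
  have d: "((\<lambda>w. genE \<rho> q s w y) has_field_derivative S (fc \<rho> q s) (of_real q) y) (at (of_real q))"
  proof (rule has_field_derivative_transform_within_open[OF _ open_ball])
    show "((\<lambda>w. S (ep \<rho> q s) (of_real q) y + (w - of_real q) * S (fc \<rho> q s) w y) has_field_derivative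
          S (fc \<rho> q s) (of_real q) y) (at (of_real q))"
      using deriv_expand_u[OF Qn y] by simp
    show "of_real q \<in> ball (0::complex) 1" using Qn by simp
    fix w :: complex assume "w \<in> ball 0 1"
    then show "S (ep \<rho> q s) (of_real q) y + (w - of_real q) * S (fc \<rho> q s) w y = genE \<rho> q s w y"
      using genE_expand[of w y] y by simp
  qed
  show ?thesis unfolding genF_def using True DERIV_imp_deriv[OF d] by simp
qed

end

context
  fixes \<rho> q :: real and s :: complex
  assumes rp: "\<rho> > 0" and q0: "0 < q" and q1: "q < 1" and sp: "Re s \<ge> 0"
begin

lemma dFu:
  assumes u: "norm u < 1" and v: "norm v < 1"
  shows "deriv (\<lambda>w. genF \<rho> q s w v) u = S (du (fc \<rho> q s)) u v"
proof (rule DERIV_imp_deriv, rule has_field_derivative_transform_within_open[OF _ open_ball])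
  show "((\<lambda>w. S (fc \<rho> q s) w v) has_field_derivative S (du (fc \<rho> q s)) u v) (at u)"
    by (rule S_deriv_u[OF good_fc[OF rp q0 q1 sp] u v])
  show "u \<in> ball 0 1" using u by simp
  fix w :: complex assume "w \<in> ball 0 1"
  then show "S (fc \<rho> q s) w v = genF \<rho> q s w v" using genF_S[OF rp q0 q1 sp _ v, of w] by simp
qed

lemma dFv:
  assumes u: "norm u < 1" and v: "norm v < 1"
  shows "deriv (\<lambda>w. genF \<rho> q s u w) v = S (dv (fc \<rho> q s)) u v"
proof (rule DERIV_imp_deriv, rule has_field_derivative_transform_within_open[OF _ open_ball])
  show "((\<lambda>w. S (fc \<rho> q s) u w) has_field_derivative S (dv (fc \<rho> q s)) u v) (at v)"
    by (rule S_deriv_v[OF good_fc[OF rp q0 q1 sp] u v])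
  show "v \<in> ball 0 1" using v by simp
  fix w :: complex assume "w \<in> ball 0 1"
  then show "S (fc \<rho> q s) u w = genF \<rho> q s u w" using genF_S[OF rp q0 q1 sp u, of w] by simp
qed

lemma dG:
  assumes v: "norm v < 1"
  shows "deriv (\<lambda>w. genE \<rho> q s (of_real q) w) v = S (dv (ep \<rho> q s)) (of_real q) v"
proof (rule DERIV_imp_deriv, rule has_field_derivative_transform_within_open[OF _ open_ball])
  show "((\<lambda>w. S (ep \<rho> q s) (of_real q) w) has_field_derivative S (dv (ep \<rho> q s)) (of_real q) v) (at v)"
    by (rule S_deriv_v[OF good_ep[OF rp q0 q1 sp] Qn[OF rp q0 q1 sp] v])
  show "v \<in> ball 0 1" using v by simp
  fix w :: complex assume "w \<in> ball 0 1"
  then show "S (ep \<rho> q s) (of_real q) w = genE \<rho> q s (of_real q) w"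
    using genE_S[OF rp q0 q1 sp Qn[OF rp q0 q1 sp], of w] by simp
qed

lemma rel_Eu:
  assumes u: "norm u < 1" and v: "norm v < 1"
  shows "S (du (ep \<rho> q s)) u v = S (fc \<rho> q s) u v + (u - of_real q) * S (du (fc \<rho> q s)) u v"
proof (rule DERIV_unique[OF S_deriv_u[OF good_ep[OF rp q0 q1 sp] u v]])
  show "((\<lambda>w. S (ep \<rho> q s) w v) has_field_derivative
      S (fc \<rho> q s) u v + (u - of_real q) * S (du (fc \<rho> q s)) u v) (at u)"
  proof (rule has_field_derivative_transform_within_open[OF deriv_expand_u[OF rp q0 q1 sp u v] open_ball])
    show "u \<in> ball 0 1" using u by simp
    fix w :: complex assume "w \<in> ball 0 1"
    then show "S (ep \<rho> q s) (of_real q) v + (w - of_real q) * S (fc \<rho> q s) w v = S (ep \<rho> q s) w v"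
      using S_expand[OF rp q0 q1 sp _ v, of w] by simp
  qed
qed

lemma rel_Ev:
  assumes u: "norm u < 1" and v: "norm v < 1"
  shows "S (dv (ep \<rho> q s)) u v = S (dv (ep \<rho> q s)) (of_real q) v + (u - of_real q) * S (dv (fc \<rho> q s)) u v"
proof (rule DERIV_unique[OF S_deriv_v[OF good_ep[OF rp q0 q1 sp] u v]])
  have d: "((\<lambda>w. S (ep \<rho> q s) (of_real q) w + (u - of_real q) * S (fc \<rho> q s) u w) has_field_derivative
      S (dv (ep \<rho> q s)) (of_real q) v + (u - of_real q) * S (dv (fc \<rho> q s)) u v) (at v)"
    by (intro DERIV_add DERIV_cmult S_deriv_v good_ep[OF rp q0 q1 sp] good_fc[OF rp q0 q1 sp] Qn[OF rp q0 q1 sp] u v)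
  show "((\<lambda>w. S (ep \<rho> q s) u w) has_field_derivative
      S (dv (ep \<rho> q s)) (of_real q) v + (u - of_real q) * S (dv (fc \<rho> q s)) u v) (at v)"
  proof (rule has_field_derivative_transform_within_open[OF d open_ball])
    show "v \<in> ball 0 1" using v by simp
    fix w :: complex assume "w \<in> ball 0 1"
    then show "S (ep \<rho> q s) (of_real q) w + (u - of_real q) * S (fc \<rho> q s) u w = S (ep \<rho> q s) u w"
      using S_expand[OF rp q0 q1 sp u, of w] by simp
  qed
qed

end

context
  fixes \<rho> q :: real and s :: complex
  assumes rp: "\<rho> > 0" and q0: "0 < q" and q1: "q < 1" and sp: "Re s \<ge> 0"
begin

lemma coef:
  "(of_real \<rho> + 1 + s) * (of_nat n * ep \<rho> q s n b + of_nat b * ep \<rho> q s n b)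
   = of_real \<rho> * (1 - of_real q) * (of_nat n * fc \<rho> q s n b + of_nat b * fc \<rho> q s n b)
     + (if b = 1 then 1 else 0)
     + (if b = 0 then 0 else of_nat (b - 1) * ep \<rho> q s n (b - 1) + ep \<rho> q s n (b - 1))
     + (if n = 0 then 0 else of_nat (n - 1) * ep \<rho> q s (n - 1) b + ep \<rho> q s (n - 1) b)"
proof (cases b)
  case 0
  then show ?thesis by (simp add: ep_def fc_def)
next
  case (Suc b')
  define e where "e = e_star \<rho> q s"
  define N :: complex where "N = of_nat n"
  define B :: complex where "B = of_nat b"
  define f where "f = fc \<rho> q s n b"
  have bnz: "b \<noteq> 0" using Suc by simp
  have epb: "ep \<rho> q s m b = e m b" for m using bnz by (simp add: ep_def e_def)
  have rec: "(of_real \<rho> + 1 + s) * e n b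
    = of_real \<rho> * (\<Sum>c. of_real ((1 - q) * q^c) * e (n + c + 1) b)
      + of_real (real b / real (n + b)) * e n (b - 1)
      + of_real (real n / real (n + b)) * e (n - 1) b"
    unfolding e_def by (rule e_rec[OF rp q0 q1 sp bnz])
  have W: "(\<Sum>c. of_real ((1 - q) * q^c) * e (n + c + 1) b) = (1 - of_real q) * f"
  proof -
    have "(\<Sum>c. of_real ((1 - q) * q^c) * e (n + c + 1) b) = (\<Sum>c. (1 - of_real q) * ((of_real q)^c * ep \<rho> q s (n + c + 1) b))"
      by (simp add: epb mult.assoc)
    also have "\<dots> = (1 - of_real q) * f"
      unfolding f_def fc_def by (rule suminf_mult[OF fc_summable[OF rp q0 q1 sp]])
    finally show ?thesis .
  qed
  have pos: "real (n + b) > 0" using bnz by simp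
  have NB: "N + B = of_real (real (n + b))" unfolding N_def B_def by simp
  have hB: "(N + B) * of_real (real b / real (n + b)) = B"
  proof -
    have h: "real (n + b) * (real b / real (n + b)) = real b" using pos by simp
    have "(N + B) * of_real (real b / real (n + b)) = of_real (real (n + b)) * of_real (real b / real (n + b))"
      by (simp only: NB)
    also have "\<dots> = of_real (real (n + b) * (real b / real (n + b)))" by (simp only: of_real_mult)
    also have "\<dots> = of_real (real b)" by (simp only: h)
    also have "\<dots> = B" by (simp add: B_def)
    finally show ?thesis .
  qed
  have hN: "(N + B) * of_real (real n / real (n + b)) = N"
  proof -
    have h: "real (n + b) * (real n / real (n + b)) = real n" using pos by simp
    have "(N + B) * of_real (real n / real (n + b)) = of_real (real (n + b)) * of_real (real n / real (n + b))"
      by (simp only: NB)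
    also have "\<dots> = of_real (real (n + b) * (real n / real (n + b)))" by (simp only: of_real_mult)
    also have "\<dots> = of_real (real n)" by (simp only: h)
    also have "\<dots> = N" by (simp add: N_def)
    finally show ?thesis .
  qed
  have key: "(of_real \<rho> + 1 + s) * ((N + B) * e n b)
      = of_real \<rho> * (1 - of_real q) * ((N + B) * f) + B * e n (b - 1) + N * e (n - 1) b"
  proof -
    have "(of_real \<rho> + 1 + s) * ((N + B) * e n b) = (N + B) * ((of_real \<rho> + 1 + s) * e n b)"
      by (simp add: algebra_simps)
    also have "\<dots> = (N + B) * (of_real \<rho> * ((1 - of_real q) * f))
        + ((N + B) * of_real (real b / real (n + b))) * e n (b - 1)
        + ((N + B) * of_real (real n / real (n + b))) * e (n - 1) b"
      unfolding rec W by (simp add: algebra_simps)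
    also have "\<dots> = of_real \<rho> * (1 - of_real q) * ((N + B) * f) + B * e n (b - 1) + N * e (n - 1) b"
      unfolding hB hN by (simp add: algebra_simps)
    finally show ?thesis .
  qed
  have IC1: "(if b = 1 then 1 else 0) + (if b = 0 then 0 else of_nat (b - 1) * ep \<rho> q s n (b - 1) + ep \<rho> q s n (b - 1))
      = B * e n (b - 1)"
  proof (cases b')
    case 0
    then show ?thesis using Suc e_zero[OF rp q0 q1 sp] by (simp add: B_def e_def ep_def)
  next
    case (Suc b'')
    then show ?thesis using \<open>b = Suc b'\<close> by (simp add: B_def e_def ep_def algebra_simps)
  qed
  have C2: "(if n = 0 then 0 else of_nat (n - 1) * ep \<rho> q s (n - 1) b + ep \<rho> q s (n - 1) b) = N * e (n - 1) b"
    by (cases n) (simp_all add: N_def epb algebra_simps)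
  define I1 where "I1 = (if b = 1 then 1 else 0) + (if b = 0 then 0 else of_nat (b - 1) * ep \<rho> q s n (b - 1) + ep \<rho> q s n (b - 1))"
  define I2 where "I2 = (if n = 0 then 0 else of_nat (n - 1) * ep \<rho> q s (n - 1) b + ep \<rho> q s (n - 1) b)"
  have "(of_real \<rho> + 1 + s) * (of_nat n * ep \<rho> q s n b + of_nat b * ep \<rho> q s n b)
      = (of_real \<rho> + 1 + s) * ((N + B) * e n b)"
    by (simp add: N_def B_def epb algebra_simps)
  also have "\<dots> = of_real \<rho> * (1 - of_real q) * ((N + B) * f) + B * e n (b - 1) + N * e (n - 1) b"
    by (rule key)
  also have "\<dots> = of_real \<rho> * (1 - of_real q) * (N * f + B * f) + I1 + I2"
    unfolding I1_def I2_def IC1 C2 by (simp add: algebra_simps)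
  finally show ?thesis unfolding I1_def I2_def N_def B_def f_def by (simp add: add.assoc)
qed

end

lemma alg:
  fixes u v Q r s F Fu Fv G Gd W :: complex
  assumes "(r + 1 + s) * (u * (F + (u - Q) * Fu) + v * (Gd + (u - Q) * Fv))
      = r * (1 - Q) * (u * Fu + v * Fv) + W + v * (v * (Gd + (u - Q) * Fv) + (G + (u - Q) * F))
        + u * (u * (F + (u - Q) * Fu) + (G + (u - Q) * F))"
  shows "u * (u\<^sup>2 - (s + 1 + r + Q) * u + s * Q + r + Q) * Fu
      + v * (r * (1 - Q) - (s + 1 + r - v) * (u - Q)) * Fv
      + (u * (u - s - 1 - r) + (u - Q) * (u + v)) * F
      + (W + (u + v) * G - v * (s + 1 + r - v) * Gd) = 0"
proof -
  have "u * (u\<^sup>2 - (s + 1 + r + Q) * u + s * Q + r + Q) * Fu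
      + v * (r * (1 - Q) - (s + 1 + r - v) * (u - Q)) * Fv
      + (u * (u - s - 1 - r) + (u - Q) * (u + v)) * F
      + (W + (u + v) * G - v * (s + 1 + r - v) * Gd)
      = (r * (1 - Q) * (u * Fu + v * Fv) + W + v * (v * (Gd + (u - Q) * Fv) + (G + (u - Q) * F))
        + u * (u * (F + (u - Q) * Fu) + (G + (u - Q) * F)))
        - (r + 1 + s) * (u * (F + (u - Q) * Fu) + v * (Gd + (u - Q) * Fv))"
    by (simp add: algebra_simps power2_eq_square)
  then show ?thesis using assms by simp
qed

context
  fixes \<rho> q :: real and s :: complex
  assumes rp: "\<rho> > 0" and q0: "0 < q" and q1: "q < 1" and sp: "Re s \<ge> 0"
begin

lemma S_identity:
  assumes u: "norm u < 1" and v: "norm v < 1"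
  shows "(of_real \<rho> + 1 + s) * (u * S (du (ep \<rho> q s)) u v + v * S (dv (ep \<rho> q s)) u v)
    = of_real \<rho> * (1 - of_real q) * (u * S (du (fc \<rho> q s)) u v + v * S (dv (fc \<rho> q s)) u v)
      + v / (1 - u) + v * (v * S (dv (ep \<rho> q s)) u v + S (ep \<rho> q s) u v)
      + u * (u * S (du (ep \<rho> q s)) u v + S (ep \<rho> q s) u v)"
proof -
  define e where "e = ep \<rho> q s"
  define f where "f = fc \<rho> q s"
  define K where "K = of_real \<rho> + 1 + s"
  define R where "R = of_real \<rho> * (1 - of_real q :: complex)"
  define A1 where "A1 = (\<lambda>n b. of_nat n * e n b)"
  define A2 where "A2 = (\<lambda>n b. of_nat b * e n b)"
  define B1 where "B1 = (\<lambda>n b. of_nat n * f n b)"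
  define B2 where "B2 = (\<lambda>n b. of_nat b * f n b)"
  define I :: "nat \<Rightarrow> nat \<Rightarrow> complex" where "I = (\<lambda>n b. if b = 1 then 1 else 0)"
  define A2e where "A2e = (\<lambda>n b. A2 n b + e n b)"
  define A1e where "A1e = (\<lambda>n b. A1 n b + e n b)"
  define C1 where "C1 = (\<lambda>n b. if b = 0 then 0 else A2e n (b - 1))"
  define C2 where "C2 = (\<lambda>n b. if n = 0 then 0 else A1e (n - 1) b)"
  have ge: "good e" unfolding e_def by (rule good_ep[OF rp q0 q1 sp])
  have gf: "good f" unfolding f_def by (rule good_fc[OF rp q0 q1 sp])
  have gA1: "good A1" unfolding A1_def by (rule good_mul_n[OF ge])
  have gA2: "good A2" unfolding A2_def by (rule good_mul_b[OF ge])
  have gB1: "good B1" unfolding B1_def by (rule good_mul_n[OF gf])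
  have gB2: "good B2" unfolding B2_def by (rule good_mul_b[OF gf])
  have gI: "good I" unfolding I_def by (rule good_ind)
  have gA2e: "good A2e" unfolding A2e_def by (rule good_add[OF gA2 ge])
  have gA1e: "good A1e" unfolding A1e_def by (rule good_add[OF gA1 ge])
  have gC1: "good C1" unfolding C1_def by (rule good_up_v[OF gA2e])
  have gC2: "good C2" unfolding C2_def by (rule good_up_u[OF gA1e])
  have gA12: "good (\<lambda>n b. A1 n b + A2 n b)" by (rule good_add[OF gA1 gA2])
  have gB12: "good (\<lambda>n b. B1 n b + B2 n b)" by (rule good_add[OF gB1 gB2])
  have gRB: "good (\<lambda>n b. R * (B1 n b + B2 n b))" by (rule good_cmult[OF gB12])
  have g1: "good (\<lambda>n b. R * (B1 n b + B2 n b) + I n b)" by (rule good_add[OF gRB gI])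
  have g2: "good (\<lambda>n b. R * (B1 n b + B2 n b) + I n b + C1 n b)" by (rule good_add[OF g1 gC1])
  have coefeq: "(\<lambda>n b. K * (A1 n b + A2 n b)) = (\<lambda>n b. R * (B1 n b + B2 n b) + I n b + C1 n b + C2 n b)"
    by (intro ext) (unfold K_def R_def A1_def A2_def B1_def B2_def I_def C1_def C2_def A1e_def A2e_def e_def f_def,
        rule coef[OF rp q0 q1 sp])
  have L: "S (\<lambda>n b. K * (A1 n b + A2 n b)) u v = K * (S A1 u v + S A2 u v)"
    using S_cmult[OF gA12 u v, of K] S_add[OF gA1 gA2 u v] by simp
  have R: "S (\<lambda>n b. R * (B1 n b + B2 n b) + I n b + C1 n b + C2 n b) u v
      = R * (S B1 u v + S B2 u v) + S I u v + S C1 u v + S C2 u v"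
    using S_add[OF g2 gC2 u v] S_add[OF g1 gC1 u v] S_add[OF gRB gI u v]
      S_cmult[OF gB12 u v, of R] S_add[OF gB1 gB2 u v] by simp
  have sA1: "S A1 u v = u * S (du e) u v" unfolding A1_def by (rule S_mul_n[OF ge u v, symmetric])
  have sA2: "S A2 u v = v * S (dv e) u v" unfolding A2_def by (rule S_mul_b[OF ge u v, symmetric])
  have sB1: "S B1 u v = u * S (du f) u v" unfolding B1_def by (rule S_mul_n[OF gf u v, symmetric])
  have sB2: "S B2 u v = v * S (dv f) u v" unfolding B2_def by (rule S_mul_b[OF gf u v, symmetric])
  have sI: "S I u v = v / (1 - u)" unfolding I_def by (rule S_ind[OF u])
  have sC1: "S C1 u v = v * (S A2 u v + S e u v)"
    unfolding C1_def using S_shift_v[OF gA2e u v] S_add[OF gA2 ge u v] unfolding A2e_def by simp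
  have sC2: "S C2 u v = u * (S A1 u v + S e u v)"
    unfolding C2_def using S_shift_u[OF gA1e u v] S_add[OF gA1 ge u v] unfolding A1e_def by simp
  have "K * (S A1 u v + S A2 u v) = R * (S B1 u v + S B2 u v) + S I u v + S C1 u v + S C2 u v"
    using L R coefeq by simp
  then show ?thesis
    unfolding sC1 sC2 sI unfolding sA1 sA2 sB1 sB2 K_def R_def e_def f_def by simp
qed

end

theorem mainTheorem4:
  fixes \<rho> q :: real and s u v :: complex
  assumes "\<rho> > 0" and "0 < q" and "q < 1" and "\<rho> + q < 1"
    and "Re s \<ge> 0" and "norm u < 1" and "norm v < 1"
  shows "let P = u\<^sup>2 - (s + 1 + of_real \<rho> + of_real q) * u + s * of_real q + of_real \<rho> + of_real q;
             L = v / (1 - u) + (u + v) * genE \<rho> q s (of_real q) v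
                 - v * (s + 1 + of_real \<rho> - v) * deriv (\<lambda>w. genE \<rho> q s (of_real q) w) v
         in u * P * deriv (\<lambda>w. genF \<rho> q s w v) u
            + v * (of_real \<rho> * (1 - of_real q) - (s + 1 + of_real \<rho> - v) * (u - of_real q))
                * deriv (\<lambda>w. genF \<rho> q s u w) v
            + (u * (u - s - 1 - of_real \<rho>) + (u - of_real q) * (u + v)) * genF \<rho> q s u v
            + L = 0"
proof -
  note rp = assms(1) and q0 = assms(2) and q1 = assms(3) and sp = assms(5) and u = assms(6) and v = assms(7)
  have Q: "norm (of_real q :: complex) < 1" using q0 q1 by simp
  have h1: "deriv (\<lambda>w. genF \<rho> q s w v) u = S (du (fc \<rho> q s)) u v" by (rule dFu[OF rp q0 q1 sp u v])
  have h2: "deriv (\<lambda>w. genF \<rho> q s u w) v = S (dv (fc \<rho> q s)) u v" by (rule dFv[OF rp q0 q1 sp u v])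
  have h3: "deriv (\<lambda>w. genE \<rho> q s (of_real q) w) v = S (dv (ep \<rho> q s)) (of_real q) v" by (rule dG[OF rp q0 q1 sp v])
  have h4: "genE \<rho> q s (of_real q) v = S (ep \<rho> q s) (of_real q) v" by (rule genE_S[OF rp q0 q1 sp Q v])
  have h5: "genF \<rho> q s u v = S (fc \<rho> q s) u v" by (rule genF_S[OF rp q0 q1 sp u v])
  note ID = S_identity[OF rp q0 q1 sp u v]
  note ID' = ID[unfolded rel_Eu[OF rp q0 q1 sp u v] rel_Ev[OF rp q0 q1 sp u v] S_expand[OF rp q0 q1 sp u v]]
  show ?thesis
    unfolding Let_def h1 h2 h3 h4 h5
    by (rule alg[OF ID'])
qed

end
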